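(* Let $X$ be a digraph containing a set of $m$ vertices no two of which form a digon. Then $\eta^+(X)\ge\lceil m/2\rceil$ and $\eta^-(X)\ge \lceil m/2\rceil$.
   Context: A digraph $X$ has a finite vertex set and an arc set of ordered pairs of distinct vertices; $\{x,y\}$ is a digon if both $xy,yx$ are arcs. The Hermitian adjacency matrix $H(X)$ has $(u,v)$-entry $1$ if $uv$ and $vu$ are arcs, $i$ if only $uv$ is an arc, $-i$ if only $vu$ is an arc, and $0$ otherwise. $\eta^+(X)$ (resp. $\eta^-(X)$) is the number of non-negative (resp. non-positive) eigenvalues of $H(X)$, counted with multiplicity. *)

theory Defs
  imports "Jordan_Normal_Form.Char_Poly"
begin

definition is_digraph :: "nat \<Rightarrow> (nat \<times> nat) set \<Rightarrow> bool" where
  "is_digraph n A \<longleftrightarrow> A \<subseteq> {0..<n} \<times> {0..<n} \<and> (\<forall>x. (x, x) \<notin> A)"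

definition herm_adj :: "nat \<Rightarrow> (nat \<times> nat) set \<Rightarrow> complex mat" where
  "herm_adj n A = mat n n (\<lambda>(u, v).
     if (u, v) \<in> A \<and> (v, u) \<in> A then 1
     else if (u, v) \<in> A then \<i>
     else if (v, u) \<in> A then - \<i>
     else 0)"

definition eta_plus :: "nat \<Rightarrow> (nat \<times> nat) set \<Rightarrow> nat" where
  "eta_plus n A = (\<Sum>x \<in> {x. poly (char_poly (herm_adj n A)) x = 0 \<and> Im x = 0 \<and> Re x \<ge> 0}.
                     order x (char_poly (herm_adj n A)))"

definition eta_minus :: "nat \<Rightarrow> (nat \<times> nat) set \<Rightarrow> nat" where
  "eta_minus n A = (\<Sum>x \<in> {x. poly (char_poly (herm_adj n A)) x = 0 \<and> Im x = 0 \<and> Re x \<le> 0}.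
                     order x (char_poly (herm_adj n A)))"

end

theory Submission
  imports Defs "Jordan_Normal_Form.Schur_Decomposition"
begin


definition adj :: "complex mat \<Rightarrow> complex mat" where
  "adj M = mat (dim_col M) (dim_row M) (\<lambda>(i,j). cnj (M $$ (j,i)))"

lemma adj_carrier[simp]: "M \<in> carrier_mat n m \<Longrightarrow> adj M \<in> carrier_mat m n"
  by (auto simp: adj_def)
lemma adj_dims[simp]: "dim_row (adj M) = dim_col M" "dim_col (adj M) = dim_row M"
  by (auto simp: adj_def)
lemma adj_index[simp]: "i < dim_col M \<Longrightarrow> j < dim_row M \<Longrightarrow> adj M $$ (i,j) = cnj (M $$ (j,i))"
  by (auto simp: adj_def)
lemma adj_adj[simp]: "adj (adj M) = M"
  by (rule eq_matI) auto
lemma adj_mult: assumes "A \<in> carrier_mat n k" "B \<in> carrier_mat k m"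
  shows "adj (A * B) = adj B * adj A"
  using assms by (intro eq_matI) (auto simp: scalar_prod_def mult.commute)
lemma adj_one[simp]: "adj (1\<^sub>m n) = 1\<^sub>m n"
  by (intro eq_matI) auto

definition bd :: "complex \<Rightarrow> complex mat \<Rightarrow> complex mat" where
  "bd c M = mat (Suc (dim_row M)) (Suc (dim_col M)) (\<lambda>(i,j). if i = 0 \<and> j = 0 then c
      else if i = 0 \<or> j = 0 then 0 else M $$ (i - 1, j - 1))"

lemma bd_carrier[simp]: "M \<in> carrier_mat n m \<Longrightarrow> bd c M \<in> carrier_mat (Suc n) (Suc m)"
  by (auto simp: bd_def)
lemma bd_dims[simp]: "dim_row (bd c M) = Suc (dim_row M)" "dim_col (bd c M) = Suc (dim_col M)"
  by (auto simp: bd_def)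
lemma bd_index: "i < Suc (dim_row M) \<Longrightarrow> j < Suc (dim_col M) \<Longrightarrow> bd c M $$ (i,j) =
   (if i = 0 \<and> j = 0 then c else if i = 0 \<or> j = 0 then 0 else M $$ (i - 1, j - 1))"
  by (auto simp: bd_def)

lemma adj_bd: "adj (bd c M) = bd (cnj c) (adj M)"
  by (intro eq_matI) (auto simp: bd_index)

lemma bd_mult: assumes "M \<in> carrier_mat n k" "N \<in> carrier_mat k m"
  shows "bd a M * bd b N = bd (a * b) (M * N)"
proof (intro eq_matI)
  fix i j assume i: "i < dim_row (bd (a * b) (M * N))" and j: "j < dim_col (bd (a * b) (M * N))"
  have "(bd a M * bd b N) $$ (i,j) = (\<Sum>l\<in>{0..<Suc k}. bd a M $$ (i,l) * bd b N $$ (l,j))"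
    using i j assms by (simp add: scalar_prod_def)
  also have "\<dots> = bd a M $$ (i,0) * bd b N $$ (0,j) + (\<Sum>l\<in>{0..<k}. bd a M $$ (i,Suc l) * bd b N $$ (Suc l,j))"
    by (subst sum.atLeast0_lessThan_Suc_shift) simp
  also have "\<dots> = bd (a * b) (M * N) $$ (i,j)"
    using i j assms by (cases i; cases j) (auto simp: bd_index scalar_prod_def)
  finally show "(bd a M * bd b N) $$ (i,j) = bd (a * b) (M * N) $$ (i,j)" .
qed (use assms in auto)

lemma bd_one: "bd 1 (1\<^sub>m n) = 1\<^sub>m (Suc n)"
  by (intro eq_matI) (auto simp: bd_index)

definition dg :: "nat \<Rightarrow> (nat \<Rightarrow> real) \<Rightarrow> complex mat" where
  "dg n d = mat n n (\<lambda>(i,j). if i = j then complex_of_real (d i) else 0)"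

lemma dg_carrier[simp]: "dg n d \<in> carrier_mat n n" by (simp add: dg_def)

lemma dg_Suc: "dg (Suc n) d = bd (complex_of_real (d 0)) (dg n (\<lambda>p. d (Suc p)))"
  by (intro eq_matI) (auto simp: bd_index dg_def)



definition nrm :: "complex vec \<Rightarrow> complex vec" where
  "nrm w = complex_of_real (1 / sqrt (Re (w \<bullet>c w))) \<cdot>\<^sub>v w"

lemma cscalar_smult: assumes "v \<in> carrier_vec n" "w \<in> carrier_vec n"
  shows "(a \<cdot>\<^sub>v v) \<bullet>c (b \<cdot>\<^sub>v w) = a * cnj b * (v \<bullet>c w)"
  using assms by (simp add: scalar_prod_def sum_distrib_left ac_simps)

lemma cscalar_self: assumes "w \<in> carrier_vec n" "w \<noteq> 0\<^sub>v n"
  shows "Re (w \<bullet>c w) > 0" "Im (w \<bullet>c w) = 0"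
proof -
  have "w \<bullet>c w > 0" using conjugate_square_greater_0_vec[OF assms(1)] assms(2) by simp
  then show "Re (w \<bullet>c w) > 0" "Im (w \<bullet>c w) = 0" by (auto simp: less_complex_def)
qed

lemma nrm_unit: assumes "w \<in> carrier_vec n" "w \<noteq> 0\<^sub>v n"
  shows "nrm w \<bullet>c nrm w = 1"
proof -
  note c = cscalar_self[OF assms]
  define r where "r = Re (w \<bullet>c w)"
  have wr: "w \<bullet>c w = complex_of_real r" using c by (simp add: complex_eq_iff r_def)
  have r: "r > 0" using c r_def by simp
  have "nrm w \<bullet>c nrm w = complex_of_real (1 / sqrt r) * complex_of_real (1 / sqrt r) * complex_of_real r"
    unfolding nrm_def r_def[symmetric] by (subst cscalar_smult[OF assms(1) assms(1)]) (simp add: wr)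
  also have "\<dots> = complex_of_real ((1 / sqrt r) * (1 / sqrt r) * r)"
    by (simp only: of_real_mult)
  also have "(1 / sqrt r) * (1 / sqrt r) * r = 1"
  proof -
    have "(1 / sqrt r) * (1 / sqrt r) = 1 / (sqrt r * sqrt r)" by simp
    also have "sqrt r * sqrt r = r" using r by simp
    finally show ?thesis using r by simp
  qed
  finally show ?thesis by simp
qed

lemma nrm_orth: assumes "v \<in> carrier_vec n" "w \<in> carrier_vec n" "v \<bullet>c w = 0"
  shows "nrm v \<bullet>c nrm w = 0"
  unfolding nrm_def using assms by (subst cscalar_smult[OF assms(1,2)]) simp

lemma nrm_carrier[simp]: "w \<in> carrier_vec n \<Longrightarrow> nrm w \<in> carrier_vec n"
  by (simp add: nrm_def)

lemma orthonormal_basis: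
  assumes v: "v \<in> carrier_vec n" and v0: "v \<noteq> 0\<^sub>v n"
  shows "\<exists>W. W \<in> carrier_mat n n \<and> adj W * W = 1\<^sub>m n \<and> W * adj W = 1\<^sub>m n
     \<and> col W 0 = nrm v"
proof -
  interpret cof_vec_space n "TYPE(complex)" .
  define b where "b = basis_completion v"
  from basis_completion[OF v v0, folded b_def]
  have dist_b: "distinct b" 
    and indep: "\<not> lin_dep (set b)" and b: "set b \<subseteq> carrier_vec n" and hdb: "hd b = v" 
    and len_b: "length b = n" by auto
  have n: "n \<noteq> 0" using v v0 by (cases n) auto
  from hdb len_b n obtain vs where bv: "b = v # vs" by (cases b, auto)
  define ws where "ws = gram_schmidt n b"
  from gram_schmidt_result[OF b dist_b indep ws_def]
  have ws: "set ws \<subseteq> carrier_vec n" "corthogonal ws" "length ws = n" 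
    by (auto simp: len_b)
  from gram_schmidt_hd[OF v, of vs, folded bv] have hdws: "hd ws = v" unfolding ws_def .
  define us where "us = map nrm ws"
  have us: "set us \<subseteq> carrier_vec n" "length us = n" using ws by (auto simp: us_def)
  have wsc: "\<And>k. k < n \<Longrightarrow> ws ! k \<in> carrier_vec n" using ws by auto
  have ws0: "\<And>k. k < n \<Longrightarrow> ws ! k \<noteq> 0\<^sub>v n"
  proof
    fix k assume k: "k < n" "ws ! k = 0\<^sub>v n"
    have "ws ! k \<bullet>c ws ! k \<noteq> 0" using corthogonalD[OF ws(2), of k k] k ws by auto
    then show False using k by simp
  qed
  have usinner: "\<And>k l. k < n \<Longrightarrow> l < n \<Longrightarrow> us ! k \<bullet>c us ! l = (if k = l then 1 else 0)"
  proof -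
    fix k l assume k: "k < n" and l: "l < n"
    show "us ! k \<bullet>c us ! l = (if k = l then 1 else 0)"
    proof (cases "k = l")
      case True
      then show ?thesis using nrm_unit[OF wsc[OF k] ws0[OF k]] k ws by (simp add: us_def)
    next
      case False
      have "ws ! k \<bullet>c ws ! l = 0" using corthogonalD[OF ws(2), of k l] k l ws False by auto
      then show ?thesis using nrm_orth[OF wsc[OF k] wsc[OF l]] k l ws False by (simp add: us_def)
    qed
  qed
  define W where "W = mat_of_cols n us"
  have W: "W \<in> carrier_mat n n" using us mat_of_cols_carrier(1)[of n us] by (simp add: W_def)
  have Wi: "\<And>i k. i < n \<Longrightarrow> k < n \<Longrightarrow> W $$ (i,k) = us ! k $ i"
    using us by (simp add: W_def mat_of_cols_index)
  have usc: "\<And>k. k < n \<Longrightarrow> us ! k \<in> carrier_vec n" using us by auto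
  have "adj W * W = 1\<^sub>m n"
  proof (rule eq_matI)
    fix k l assume k: "k < dim_row (1\<^sub>m n :: complex mat)" and l: "l < dim_col (1\<^sub>m n :: complex mat)"
    have "(adj W * W) $$ (k,l) = (\<Sum>i = 0..<n. cnj (W $$ (i,k)) * W $$ (i,l))"
      using k l W by (simp add: scalar_prod_def)
    also have "\<dots> = us ! l \<bullet>c us ! k"
      using k l usc[of k] usc[of l] by (simp add: Wi scalar_prod_def mult.commute)
    also have "\<dots> = 1\<^sub>m n $$ (k,l)" using usinner[of l k] k l by auto
    finally show "(adj W * W) $$ (k,l) = 1\<^sub>m n $$ (k,l)" .
  qed (use W in auto)
  moreover then have "W * adj W = 1\<^sub>m n"
    using mat_mult_left_right_inverse[of "adj W" n W] W by auto
  moreover have "col W 0 = nrm v"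
  proof -
    have "col W 0 = us ! 0" unfolding W_def using us n by (intro col_mat_of_cols) auto
    also have "us ! 0 = nrm v" using hdws ws n by (cases ws) (auto simp: us_def)
    finally show ?thesis .
  qed
  ultimately show ?thesis using W by blast
qed



lemma sq_mult: "A \<in> carrier_mat n n \<Longrightarrow> B \<in> carrier_mat n n \<Longrightarrow> A * B \<in> carrier_mat n n"
  by (rule mult_carrier_mat)
lemma sq_assoc: "A \<in> carrier_mat n n \<Longrightarrow> B \<in> carrier_mat n n \<Longrightarrow> C \<in> carrier_mat n n \<Longrightarrow> A * B * C = A * (B * C)"
  by (rule assoc_mult_mat)

lemma spectral:
  "A \<in> carrier_mat n n \<Longrightarrow> adj A = A \<Longrightarrow>
   \<exists>U d. U \<in> carrier_mat n n \<and> U * adj U = 1\<^sub>m n \<and> A = U * dg n d * adj U"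
proof (induction n arbitrary: A)
  case 0
  then show ?case
    by (intro exI[of _ A] exI[of _ "\<lambda>_. 0"]) (auto intro!: eq_matI)
next
  case (Suc n)
  have A: "A \<in> carrier_mat (Suc n) (Suc n)" and herm: "adj A = A" by fact+
  obtain as where cp: "char_poly A = (\<Prod>a\<leftarrow>as. [:- a, 1:])" and las: "length as = Suc n"
    using char_poly_factorized[OF A] by blast
  then obtain e as' where ase: "as = e # as'" by (cases as) auto
  have "poly (char_poly A) e = 0" by (simp add: cp ase)
  then have "eigenvalue A e" using eigenvalue_root_char_poly[OF A] by simp
  then obtain v where v: "v \<in> carrier_vec (Suc n)" and v0: "v \<noteq> 0\<^sub>v (Suc n)"
    and ev: "A *\<^sub>v v = e \<cdot>\<^sub>v v"
    unfolding eigenvalue_def eigenvector_def using A by auto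
  obtain W where W: "W \<in> carrier_mat (Suc n) (Suc n)" and WW: "adj W * W = 1\<^sub>m (Suc n)"
    and WW': "W * adj W = 1\<^sub>m (Suc n)" and c0: "col W 0 = nrm v"
    using orthonormal_basis[OF v v0] by blast
  have evn: "A *\<^sub>v col W 0 = e \<cdot>\<^sub>v col W 0"
    unfolding c0 nrm_def using mult_mat_vec[OF A v] ev
    by (simp add: smult_smult_assoc mult.commute)
  define A' where "A' = adj W * A * W"
  have A': "A' \<in> carrier_mat (Suc n) (Suc n)" using A W unfolding A'_def by (meson adj_carrier mult_carrier_mat)
  have hA': "adj A' = A'"
  proof -
    have aWA: "adj W * A \<in> carrier_mat (Suc n) (Suc n)" using A W by (meson adj_carrier mult_carrier_mat)
    have "adj A' = adj W * adj (adj W * A)"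
      unfolding A'_def by (rule adj_mult[OF aWA W])
    also have "adj (adj W * A) = adj A * W"
      using adj_mult[OF adj_carrier[OF W] A] by simp
    finally show ?thesis unfolding A'_def herm using A W
      by (simp add: assoc_mult_mat[of _ "Suc n" "Suc n" _ "Suc n" _ "Suc n"])
  qed
  have A'col: "A' $$ (k, 0) = (if k = 0 then e else 0)" if k: "k < Suc n" for k
  proof -
    have "A' $$ (k,0) = (adj W * (A * W)) $$ (k,0)" unfolding A'_def
      by (simp add: assoc_mult_mat[OF adj_carrier[OF W] A W])
    also have "\<dots> = row (adj W) k \<bullet> col (A * W) 0" using k A W by simp
    also have "col (A * W) 0 = A *\<^sub>v col W 0" by (rule col_mult2[OF A W]) simp
    also have "\<dots> = e \<cdot>\<^sub>v col W 0" by (rule evn)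
    also have "row (adj W) k \<bullet> (e \<cdot>\<^sub>v col W 0) = e * (row (adj W) k \<bullet> col W 0)"
      using W k by simp
    also have "row (adj W) k \<bullet> col W 0 = (adj W * W) $$ (k,0)" using W k by simp
    also have "\<dots> = (if k = 0 then 1 else 0)" using WW k by simp
    finally show ?thesis by simp
  qed
  have A'h: "A' $$ (j, i) = cnj (A' $$ (i,j))" if "i < Suc n" "j < Suc n" for i j
  proof -
    have "adj A' $$ (j, i) = A' $$ (j,i)" using hA' by simp
    then show ?thesis using that A' by simp
  qed
  have ereal: "cnj e = e" using A'h[of 0 0] A'col[of 0] by simp
  then have ere: "complex_of_real (Re e) = e" by (simp add: complex_eq_iff)
  define A3 where "A3 = mat n n (\<lambda>(i,j). A' $$ (Suc i, Suc j))"
  have A3: "A3 \<in> carrier_mat n n" by (simp add: A3_def)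
  have hA3: "adj A3 = A3"
  proof (rule eq_matI)
    fix i j assume "i < dim_row A3" "j < dim_col A3"
    then have i: "i < n" and j: "j < n" using A3 by auto
    have "A' $$ (Suc i, Suc j) = cnj (A' $$ (Suc j, Suc i))" using A'h[of "Suc j" "Suc i"] i j by simp
    then show "adj A3 $$ (i,j) = A3 $$ (i,j)" using i j A3 by (simp add: A3_def)
  qed (use A3 in auto)
  have A'bd: "A' = bd e A3"
  proof (rule eq_matI)
    fix i j assume i: "i < dim_row (bd e A3)" and j: "j < dim_col (bd e A3)"
    then have i': "i < Suc n" and j': "j < Suc n" using A3 by auto
    show "A' $$ (i,j) = bd e A3 $$ (i,j)"
    proof (cases "j = 0")
      case True
      then show ?thesis using A'col[OF i'] i j by (simp add: bd_index)
    next
      case False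
      show ?thesis
      proof (cases "i = 0")
        case True
        then show ?thesis using A'h[OF j' i'] A'col[OF j'] False i j by (simp add: bd_index)
      next
        case False
        then show ?thesis using \<open>j \<noteq> 0\<close> i j A3 by (simp add: bd_index A3_def)
      qed
    qed
  qed (use A' A3 in auto)
  obtain V d3 where V: "V \<in> carrier_mat n n" and VV: "V * adj V = 1\<^sub>m n"
    and A3d: "A3 = V * dg n d3 * adj V"
    using Suc.IH[OF A3 hA3] by blast
  define d where "d = (\<lambda>p. if p = 0 then Re e else d3 (p - 1))"
  define V1 where "V1 = bd 1 V"
  have V1: "V1 \<in> carrier_mat (Suc n) (Suc n)" using V by (simp add: V1_def)
  have dgd: "dg (Suc n) d = bd e (dg n d3)"
    unfolding dg_Suc by (simp add: d_def ere)
  have A'd: "A' = V1 * dg (Suc n) d * adj V1"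
  proof -
    have "V1 * dg (Suc n) d * adj V1 = bd 1 V * bd e (dg n d3) * bd 1 (adj V)"
      by (simp add: V1_def dgd adj_bd)
    also have "\<dots> = bd e (V * dg n d3 * adj V)"
      using V by (simp add: bd_mult[of _ n n _ n])
    finally show ?thesis using A'bd A3d by simp
  qed
  have AW: "A = W * A' * adj W"
  proof -
    have "W * A' * adj W = (W * adj W) * A * (W * adj W)"
      unfolding A'_def using A W adj_carrier[OF W] by (simp add: sq_assoc[where n="Suc n"] sq_mult[where n="Suc n"])
    then show ?thesis using WW' A by simp
  qed
  define U where "U = W * V1"
  have U: "U \<in> carrier_mat (Suc n) (Suc n)" using W V1 by (simp add: U_def)
  have adjU: "adj U = adj V1 * adj W" unfolding U_def using W V1 by (simp add: adj_mult)
  have "A = U * dg (Suc n) d * adj U"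
    unfolding adjU unfolding AW A'd U_def using W V1 adj_carrier[OF W] adj_carrier[OF V1] dg_carrier[of "Suc n" d]
    by (simp add: sq_assoc[where n="Suc n"] sq_mult[where n="Suc n"])
  moreover have "U * adj U = 1\<^sub>m (Suc n)"
  proof -
    have "V1 * adj V1 = 1\<^sub>m (Suc n)"
      using V VV by (simp add: V1_def adj_bd bd_mult[of _ n n _ n] bd_one)
    have "U * adj U = W * (V1 * adj V1) * adj W"
      unfolding adjU unfolding U_def using W V1 adj_carrier[OF W] adj_carrier[OF V1]
      by (simp add: sq_assoc[where n="Suc n"] sq_mult[where n="Suc n"])
    also have "\<dots> = 1\<^sub>m (Suc n)" using \<open>V1 * adj V1 = 1\<^sub>m (Suc n)\<close> W WW' by simp
    finally show ?thesis .
  qed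
  ultimately show ?case using U by blast
qed



lemma underdet:
  "\<forall>F S. finite S \<longrightarrow> finite (F :: (nat \<Rightarrow> real) set) \<longrightarrow> card F \<le> k \<longrightarrow> k < card S \<longrightarrow>
     (\<exists>x::nat \<Rightarrow> real. (\<exists>s\<in>S. x s \<noteq> 0) \<and> (\<forall>f\<in>F. (\<Sum>s\<in>S. f s * x s) = 0))"
proof (induction k)
  case 0
  show ?case
  proof (intro allI impI)
    fix F :: "(nat \<Rightarrow> real) set" and S :: "nat set"
    assume S: "finite S" and F: "finite F" and cF: "card F \<le> 0" and cS: "0 < card S"
    then have F0: "F = {}" by simp
    from cS obtain s0 where s0: "s0 \<in> S" by (metis card.empty ex_in_conv less_irrefl)
    show "\<exists>x::nat \<Rightarrow> real. (\<exists>s\<in>S. x s \<noteq> 0) \<and> (\<forall>f\<in>F. (\<Sum>s\<in>S. f s * x s) = 0)"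
      using s0 F0 by (intro exI[of _ "\<lambda>s. if s = s0 then 1 else 0"]) auto
  qed
next
  case (Suc k)
  show ?case
  proof (intro allI impI)
    fix F :: "(nat \<Rightarrow> real) set" and S :: "nat set"
    assume S: "finite S" and F: "finite F" and cF: "card F \<le> Suc k" and cS: "Suc k < card S"
    show "\<exists>x::nat \<Rightarrow> real. (\<exists>s\<in>S. x s \<noteq> 0) \<and> (\<forall>f\<in>F. (\<Sum>s\<in>S. f s * x s) = 0)"
    proof (cases "card F \<le> k")
      case True
      have "k < card S" using cS by simp
      then show ?thesis using Suc.IH[rule_format, OF S F True] by blast
    next
      case False
      then have cF': "card F = Suc k" using cF by simp
      then obtain f where fF: "f \<in> F" by (metis card.empty ex_in_conv nat.distinct(1))
      define F0 where "F0 = F - {f}"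
      have cF0: "card F0 = k" using cF' fF F by (simp add: F0_def)
      have F0: "finite F0" using F by (simp add: F0_def)
      show ?thesis
      proof (cases "\<forall>s\<in>S. f s = 0")
        case True
        obtain x where x: "\<exists>s\<in>S. x s \<noteq> 0" "\<forall>g\<in>F0. (\<Sum>s\<in>S. g s * x s) = 0"
        proof -
          have "k < card S" using cS by simp
          then show ?thesis using that Suc.IH[rule_format, OF S F0] cF0 by blast
        qed
        show ?thesis
        proof (intro exI[of _ x] conjI ballI)
          fix g assume "g \<in> F"
          then show "(\<Sum>s\<in>S. g s * x s) = 0"
            using x(2) True by (cases "g = f") (auto simp: F0_def)
        qed (use x in auto)
      next
        case False
        then obtain s0 where s0: "s0 \<in> S" and fs0: "f s0 \<noteq> 0" by auto
        define S' where "S' = S - {s0}"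
        have S': "finite S'" "card S' = card S - 1" using S s0 by (auto simp: S'_def)
        define G where "G = (\<lambda>g. \<lambda>s. g s - g s0 * f s / f s0) ` F0"
        have G: "finite G" "card G \<le> k" using F0 cF0 card_image_le[OF F0] by (auto simp: G_def)
        have kS': "k < card S'" using S'(2) cS by simp
        obtain x where x: "\<exists>s\<in>S'. x s \<noteq> 0" "\<forall>g\<in>G. (\<Sum>s\<in>S'. g s * x s) = 0"
          using Suc.IH[rule_format, OF S'(1) G(1) G(2) kS'] by blast
        define c where "c = - (\<Sum>s\<in>S'. f s * x s) / f s0"
        define x' where "x' = x(s0 := c)"
        have sumS: "(\<Sum>s\<in>S. g s * x' s) = g s0 * c + (\<Sum>s\<in>S'. g s * x s)" for g
        proof -
          have "(\<Sum>s\<in>S. g s * x' s) = g s0 * x' s0 + (\<Sum>s\<in>S'. g s * x' s)"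
            unfolding S'_def using S s0 by (simp add: sum.remove)
          also have "(\<Sum>s\<in>S'. g s * x' s) = (\<Sum>s\<in>S'. g s * x s)"
            by (rule sum.cong) (auto simp: x'_def S'_def)
          finally show ?thesis by (simp add: x'_def)
        qed
        show ?thesis
        proof (intro exI[of _ x'] conjI ballI)
          show "\<exists>s\<in>S. x' s \<noteq> 0" using x(1) by (auto simp: x'_def S'_def)
        next
          fix g assume gF: "g \<in> F"
          show "(\<Sum>s\<in>S. g s * x' s) = 0"
          proof (cases "g = f")
            case True
            then show ?thesis using fs0 by (simp add: sumS c_def)
          next
            case False
            then have "(\<lambda>s. g s - g s0 * f s / f s0) \<in> G" using gF by (auto simp: G_def F0_def)
            from bspec[OF x(2) this] have "(\<Sum>s\<in>S'. (g s - g s0 * f s / f s0) * x s) = 0" by simp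
            then have "(\<Sum>s\<in>S'. g s * x s) - g s0 / f s0 * (\<Sum>s\<in>S'. f s * x s) = 0"
              by (simp add: algebra_simps sum_subtractf sum_distrib_left)
            then show ?thesis using fs0 by (simp add: sumS c_def field_simps)
          qed
        qed
      qed
    qed
  qed
qed



lemma key:
  fixes h U :: "nat \<Rightarrow> nat \<Rightarrow> complex" and d :: "nat \<Rightarrow> real"
  assumes unit: "\<And>i j. i < n \<Longrightarrow> j < n \<Longrightarrow> (\<Sum>p<n. U i p * cnj (U j p)) = (if i = j then 1 else 0)"
    and dec: "\<And>i j. i < n \<Longrightarrow> j < n \<Longrightarrow> h i j = (\<Sum>p<n. U i p * complex_of_real (d p) * cnj (U j p))"
    and S: "S \<subseteq> {..<n}"
    and iso: "\<And>x::nat \<Rightarrow> real. (\<Sum>i\<in>S. \<Sum>j\<in>S. complex_of_real (x i) * complex_of_real (x j) * h i j) = 0"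
  shows "card S \<le> 2 * card {p. p < n \<and> 0 \<le> d p}"
proof (rule ccontr)
  assume "\<not> ?thesis"
  then have lt: "2 * card {p. p < n \<and> 0 \<le> d p} < card S" by simp
  define P where "P = {p. p < n \<and> 0 \<le> d p}"
  have finS: "finite S" using S finite_subset by blast
  have finP: "finite P" by (simp add: P_def)
  define F where "F = (\<lambda>p s. Re (U s p)) ` P \<union> (\<lambda>p s. Im (U s p)) ` P"
  have finF: "finite F" using finP by (simp add: F_def)
  have "card F \<le> card P + card P"
    unfolding F_def by (rule order_trans[OF card_Un_le add_mono[OF card_image_le[OF finP] card_image_le[OF finP]]])
  then have cF: "card F < card S" using lt by (simp add: P_def)
  obtain x :: "nat \<Rightarrow> real" where x: "\<exists>s\<in>S. x s \<noteq> 0" "\<forall>f\<in>F. (\<Sum>s\<in>S. f s * x s) = 0"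
    using underdet[rule_format, OF finS finF order_refl cF] by blast
  define y where "y = (\<lambda>p. \<Sum>j\<in>S. cnj (U j p) * complex_of_real (x j))"
  have yP: "y p = 0" if p: "p \<in> P" for p
  proof -
    have "(\<lambda>s. Re (U s p)) \<in> F" "(\<lambda>s. Im (U s p)) \<in> F" using p by (auto simp: F_def)
    from bspec[OF x(2) this(1)] bspec[OF x(2) this(2)]
    have "(\<Sum>s\<in>S. Re (U s p) * x s) = 0" "(\<Sum>s\<in>S. Im (U s p) * x s) = 0" by simp_all
    then show ?thesis by (simp add: y_def complex_eq_iff Re_sum Im_sum sum_negf)
  qed
  have quad: "(\<Sum>i\<in>S. \<Sum>j\<in>S. complex_of_real (x i) * complex_of_real (x j) * h i j)
      = (\<Sum>p<n. complex_of_real (d p) * (cnj (y p) * y p))"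
  proof -
    have "(\<Sum>p<n. complex_of_real (d p) * (cnj (y p) * y p)) =
      (\<Sum>p<n. \<Sum>i\<in>S. \<Sum>j\<in>S. complex_of_real (d p) * (U i p * complex_of_real (x i)) * (cnj (U j p) * complex_of_real (x j)))"
    proof (rule sum.cong[OF refl])
      fix p
      have cy: "cnj (y p) = (\<Sum>i\<in>S. U i p * complex_of_real (x i))" by (simp add: y_def)
      have "complex_of_real (d p) * (cnj (y p) * y p) = complex_of_real (d p) * ((\<Sum>i\<in>S. U i p * complex_of_real (x i)) * (\<Sum>j\<in>S. cnj (U j p) * complex_of_real (x j)))"
        by (simp add: cy y_def)
      also have "\<dots> = complex_of_real (d p) * (\<Sum>i\<in>S. \<Sum>j\<in>S. (U i p * complex_of_real (x i)) * (cnj (U j p) * complex_of_real (x j)))"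
        by (simp only: sum_product)
      also have "\<dots> = (\<Sum>i\<in>S. \<Sum>j\<in>S. complex_of_real (d p) * (U i p * complex_of_real (x i)) * (cnj (U j p) * complex_of_real (x j)))"
        by (simp only: sum_distrib_left mult.assoc)
      finally show "complex_of_real (d p) * (cnj (y p) * y p) = (\<Sum>i\<in>S. \<Sum>j\<in>S. complex_of_real (d p) * (U i p * complex_of_real (x i)) * (cnj (U j p) * complex_of_real (x j)))" .
    qed
    also have "\<dots> = (\<Sum>i\<in>S. \<Sum>p<n. \<Sum>j\<in>S. complex_of_real (d p) * (U i p * complex_of_real (x i)) * (cnj (U j p) * complex_of_real (x j)))"
      by (rule sum.swap)
    also have "\<dots> = (\<Sum>i\<in>S. \<Sum>j\<in>S. \<Sum>p<n. complex_of_real (d p) * (U i p * complex_of_real (x i)) * (cnj (U j p) * complex_of_real (x j)))"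
      by (rule sum.cong[OF refl], rule sum.swap)
    also have "\<dots> = (\<Sum>i\<in>S. \<Sum>j\<in>S. complex_of_real (x i) * complex_of_real (x j) * h i j)"
    proof (rule sum.cong[OF refl], rule sum.cong[OF refl])
      fix i j assume "i \<in> S" "j \<in> S"
      then have "i < n" "j < n" using S by auto
      then show "(\<Sum>p<n. complex_of_real (d p) * (U i p * complex_of_real (x i)) * (cnj (U j p) * complex_of_real (x j)))
         = complex_of_real (x i) * complex_of_real (x j) * h i j"
        by (simp add: dec sum_distrib_left ac_simps)
    qed
    finally show ?thesis by simp
  qed
  define c where "c = (\<lambda>p. (cmod (y p))\<^sup>2)"
  have "(\<Sum>p<n. complex_of_real (d p) * (cnj (y p) * y p)) = complex_of_real (\<Sum>p<n. d p * c p)"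
  proof -
    have "cnj (y p) * y p = complex_of_real (c p)" for p
      unfolding c_def by (metis complex_norm_square mult.commute)
    then show ?thesis by simp
  qed
  then have "complex_of_real (\<Sum>p<n. d p * c p) = 0" using quad iso[of x] by metis
  then have sum0: "(\<Sum>p<n. d p * c p) = 0" by (simp only: of_real_eq_0_iff)
  have "(\<Sum>p<n. d p * c p) = (\<Sum>p\<in>{..<n} - P. d p * c p)"
  proof (rule sum.mono_neutral_right)
    show "\<forall>p\<in>{..<n} - ({..<n} - P). d p * c p = 0" using yP by (auto simp: c_def P_def)
  qed auto
  then have sum0': "(\<Sum>p\<in>{..<n} - P. - (d p * c p)) = 0" using sum0 by (simp add: sum_negf)
  have nonneg: "\<forall>p\<in>{..<n} - P. 0 \<le> - (d p * c p)"
  proof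
    fix p assume "p \<in> {..<n} - P"
    then have "d p < 0" by (auto simp: P_def)
    moreover have "c p \<ge> 0" by (simp add: c_def)
    ultimately show "0 \<le> - (d p * c p)" by (simp add: mult_nonpos_nonneg)
  qed
  have "\<forall>p\<in>{..<n} - P. - (d p * c p) = 0"
    using sum_nonneg_eq_0_iff[of "{..<n} - P" "\<lambda>p. - (d p * c p)"] sum0' nonneg by auto
  then have yN: "y p = 0" if "p < n" "p \<notin> P" for p
    using that by (force simp: c_def P_def)
  have y0: "\<forall>p<n. y p = 0" using yP yN by blast
  obtain s1 where s1: "s1 \<in> S" "x s1 \<noteq> 0" using x(1) by blast
  have s1n: "s1 < n" using s1 S by auto
  have "complex_of_real (x s1) = (\<Sum>j\<in>S. if s1 = j then complex_of_real (x j) else 0)"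
    using s1 finS by (simp add: sum.delta)
  also have "\<dots> = (\<Sum>j\<in>S. (\<Sum>p<n. U s1 p * cnj (U j p)) * complex_of_real (x j))"
    by (rule sum.cong[OF refl]) (use S s1n unit in auto)
  also have "\<dots> = (\<Sum>p<n. U s1 p * y p)"
    by (simp add: y_def sum_distrib_left sum_distrib_right ac_simps sum.swap[of _ S])
  also have "\<dots> = 0" using y0 by simp
  finally show False using s1 by simp
qed



lemma order_linprod: "Polynomial.order x (\<Prod>a\<leftarrow>as. [:- a, 1:]) = count_list as (x :: complex)"
proof (induction as)
  case Nil
  then show ?case by (simp add: order_0I)
next
  case (Cons a as)
  have nz: "(\<Prod>a\<leftarrow>as. [:- a, 1:]) \<noteq> (0 :: complex poly)"
    by (auto simp: prod_list_zero_iff)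
  have "Polynomial.order x ([:- a, 1:] * (\<Prod>a\<leftarrow>as. [:- a, 1:])) = Polynomial.order x [:- a, 1:] + Polynomial.order x (\<Prod>a\<leftarrow>as. [:- a, 1:])"
  proof -
    have "[:- a, 1:] \<noteq> (0::complex poly)" by simp
    then show ?thesis using nz by (metis order_mult mult_eq_0_iff)
  qed
  moreover have "Polynomial.order x [:- a, 1:] = (if a = x then 1 else 0)"
  proof (cases "a = x")
    case True
    then show ?thesis using order_power_n_n[of x 1] by simp
  next
    case False
    then have "poly [:- a, 1:] x \<noteq> 0" by simp
    then show ?thesis using False by (simp add: order_0I)
  qed
  ultimately show ?case using Cons by simp
qed

lemma sum_count_list: "finite X \<Longrightarrow> (\<Sum>x\<in>X. count_list as x) = length (filter (\<lambda>a. a \<in> X) as)"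
proof (induction as)
  case Nil
  then show ?case by simp
next
  case (Cons a as)
  have "(\<Sum>x\<in>X. count_list (a # as) x) = (\<Sum>x\<in>X. count_list as x + (if a = x then 1 else 0))"
    by (rule sum.cong) auto
  also have "\<dots> = (\<Sum>x\<in>X. count_list as x) + (if a \<in> X then 1 else 0)"
    using Cons.prems by (simp add: sum.distrib sum.delta)
  finally show ?case using Cons by simp
qed

lemma dg_dims[simp]: "dim_row (dg n d) = n" "dim_col (dg n d) = n" by (auto simp: dg_def)

lemma root_sum:
  fixes M :: "complex mat"
  assumes cp: "char_poly M = (\<Prod>a\<leftarrow>as. [:- a, 1:])"
  shows "(\<Sum>x\<in>{x. poly (char_poly M) x = 0 \<and> Q x}. Polynomial.order x (char_poly M)) = length (filter Q as)"
proof -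
  have roots: "{x. poly (char_poly M) x = 0 \<and> Q x} = {x \<in> set as. Q x}"
    unfolding cp by (auto simp: poly_prod_list prod_list_zero_iff)
  have "(\<Sum>x\<in>{x \<in> set as. Q x}. Polynomial.order x (char_poly M)) = (\<Sum>x\<in>{x \<in> set as. Q x}. count_list as x)"
    by (simp only: cp order_linprod)
  also have "\<dots> = length (filter (\<lambda>a. a \<in> {x \<in> set as. Q x}) as)"
    by (rule sum_count_list) simp
  also have "filter (\<lambda>a. a \<in> {x \<in> set as. Q x}) as = filter Q as"
    by (rule filter_cong) auto
  finally show ?thesis unfolding roots .
qed

lemma length_filter_map_upt:
  "length (filter Q (map f [0..<n])) = card {p. p < n \<and> Q (f p)}"
proof -
  have "length (filter Q (map f [0..<n])) = length (filter (Q \<circ> f) [0..<n])"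
    by (simp add: filter_map)
  also have "\<dots> = card ({x. (Q \<circ> f) x} \<inter> set [0..<n])"
    by (rule distinct_length_filter) simp
  also have "{x. (Q \<circ> f) x} \<inter> set [0..<n] = {p. p < n \<and> Q (f p)}" by auto
  finally show ?thesis .
qed

lemma char_poly_decomp:
  assumes H: "H \<in> carrier_mat n n" and U: "U \<in> carrier_mat n n"
    and UU: "U * adj U = 1\<^sub>m n" and Hd: "H = U * dg n d * adj U"
  shows "char_poly H = (\<Prod>a\<leftarrow>map (\<lambda>p. complex_of_real (d p)) [0..<n]. [:- a, 1:])"
proof -
  have UU': "adj U * U = 1\<^sub>m n"
    using mat_mult_left_right_inverse[OF U adj_carrier[OF U] UU] .
  have "similar_mat H (dg n d)"
    by (rule similar_matI[of _ _ U "adj U" n]) (use H U UU UU' Hd in auto)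
  then have "char_poly H = char_poly (dg n d)" by (rule char_poly_similar)
  also have "\<dots> = (\<Prod>a\<leftarrow>diag_mat (dg n d). [:- a, 1:])"
    by (rule char_poly_upper_triangular[of _ n]) (auto simp: upper_triangular_def dg_def)
  also have "diag_mat (dg n d) = map (\<lambda>p. complex_of_real (d p)) [0..<n]"
    by (simp add: diag_mat_def dg_def)
  finally show ?thesis .
qed

lemma decomp_entries:
  assumes U: "U \<in> carrier_mat n n" and i: "i < n" and j: "j < n"
  shows "(U * dg n d * adj U) $$ (i,j) = (\<Sum>p<n. U $$ (i,p) * complex_of_real (d p) * cnj (U $$ (j,p)))"
proof -
  have UD: "(U * dg n d) $$ (i,p) = U $$ (i,p) * complex_of_real (d p)" if p: "p < n" for p
  proof -
    have "(U * dg n d) $$ (i,p) = (\<Sum>k = 0..<n. U $$ (i,k) * (if k = p then complex_of_real (d k) else 0))"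
      using U i p by (simp add: scalar_prod_def dg_def)
    also have "\<dots> = (\<Sum>k = 0..<n. if k = p then U $$ (i,k) * complex_of_real (d k) else 0)"
      by (rule sum.cong) auto
    also have "\<dots> = U $$ (i,p) * complex_of_real (d p)" using p by (simp add: sum.delta')
    finally show ?thesis .
  qed
  have "(U * dg n d * adj U) $$ (i,j) = (\<Sum>p = 0..<n. (U * dg n d) $$ (i,p) * cnj (U $$ (j,p)))"
    using U i j by (auto simp: scalar_prod_def intro!: sum.cong)
  also have "\<dots> = (\<Sum>p<n. U $$ (i,p) * complex_of_real (d p) * cnj (U $$ (j,p)))"
    using UD atLeast0LessThan by (auto intro!: sum.cong)
  finally show ?thesis .
qed

lemma unit_entries:
  assumes U: "U \<in> carrier_mat n n" and UU: "U * adj U = 1\<^sub>m n" and i: "i < n" and j: "j < n"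
  shows "(\<Sum>p<n. U $$ (i,p) * cnj (U $$ (j,p))) = (if i = j then 1 else 0)"
proof -
  have "(U * adj U) $$ (i,j) = (\<Sum>p = 0..<n. U $$ (i,p) * cnj (U $$ (j,p)))"
    using U i j by (simp add: scalar_prod_def)
  then show ?thesis using UU i j by (simp add: atLeast0LessThan)
qed



lemma final_ineq: "m \<le> 2 * c \<Longrightarrow> real c \<ge> of_int \<lceil>real m / 2\<rceil>"
proof -
  assume "m \<le> 2 * c"
  then have "real m / 2 \<le> real c" by simp
  then have "\<lceil>real m / 2\<rceil> \<le> int c" by (simp add: ceiling_le_iff)
  then show ?thesis by linarith
qed

theorem theorem4p3:
  fixes n m :: nat and A :: "(nat \<times> nat) set" and S :: "nat set"
  assumes "is_digraph n A"
    and "S \<subseteq> {0..<n}" and "card S = m"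
    and "\<forall>x\<in>S. \<forall>y\<in>S. \<not> ((x, y) \<in> A \<and> (y, x) \<in> A)"
  shows "real (eta_plus n A) \<ge> of_int \<lceil>real m / 2\<rceil>
     \<and> real (eta_minus n A) \<ge> of_int \<lceil>real m / 2\<rceil>"
proof -
  define H where "H = herm_adj n A"
  have H: "H \<in> carrier_mat n n" by (simp add: H_def herm_adj_def)
  have hH: "adj H = H"
    by (rule eq_matI) (auto simp: H_def herm_adj_def)
  obtain U d where U: "U \<in> carrier_mat n n" and UU: "U * adj U = 1\<^sub>m n"
    and Hd: "H = U * dg n d * adj U"
    using spectral[OF H hH] by blast
  have S: "S \<subseteq> {..<n}" using assms(2) by auto
  have unit: "\<And>i j. i < n \<Longrightarrow> j < n \<Longrightarrow> (\<Sum>p<n. U $$ (i,p) * cnj (U $$ (j,p))) = (if i = j then 1 else 0)"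
    using unit_entries[OF U UU] by blast
  have dec: "\<And>i j. i < n \<Longrightarrow> j < n \<Longrightarrow> H $$ (i,j) = (\<Sum>p<n. U $$ (i,p) * complex_of_real (d p) * cnj (U $$ (j,p)))"
    using decomp_entries[OF U] Hd by metis
  have anti: "H $$ (j,i) = - H $$ (i,j)" if "i \<in> S" "j \<in> S" for i j
  proof -
    have "i < n" "j < n" using that assms(2) by auto
    moreover have "\<not> ((i, j) \<in> A \<and> (j, i) \<in> A)" using assms(4) that by blast
    moreover have "(i, i) \<notin> A" using assms(1) by (simp add: is_digraph_def)
    ultimately show ?thesis by (auto simp: H_def herm_adj_def)
  qed
  have iso: "(\<Sum>i\<in>S. \<Sum>j\<in>S. complex_of_real (x i) * complex_of_real (x j) * H $$ (i,j)) = 0" for x :: "nat \<Rightarrow> real"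
  proof -
    define T where "T = (\<Sum>i\<in>S. \<Sum>j\<in>S. complex_of_real (x i) * complex_of_real (x j) * H $$ (i,j))"
    have "T = (\<Sum>j\<in>S. \<Sum>i\<in>S. complex_of_real (x i) * complex_of_real (x j) * H $$ (i,j))"
      unfolding T_def by (rule sum.swap)
    also have "\<dots> = (\<Sum>j\<in>S. \<Sum>i\<in>S. - (complex_of_real (x j) * complex_of_real (x i) * H $$ (j,i)))"
    proof (intro sum.cong refl)
      fix j i assume "j \<in> S" "i \<in> S"
      then have "H $$ (j,i) = - H $$ (i,j)" by (rule anti[of i j, rotated])
      then show "complex_of_real (x i) * complex_of_real (x j) * H $$ (i,j) = - (complex_of_real (x j) * complex_of_real (x i) * H $$ (j,i))"
        by simp
    qed
    also have "\<dots> = - T" unfolding T_def by (simp add: sum_negf)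
    finally show ?thesis unfolding T_def[symmetric] by simp
  qed
  have k1: "card S \<le> 2 * card {p. p < n \<and> 0 \<le> d p}"
    by (rule key[of n "\<lambda>i p. U $$ (i,p)" "\<lambda>i j. H $$ (i,j)" d S]) (use unit dec S iso in auto)
  have k2: "card S \<le> 2 * card {p. p < n \<and> 0 \<le> - d p}"
  proof (rule key[of n "\<lambda>i p. U $$ (i,p)" "\<lambda>i j. - H $$ (i,j)" "\<lambda>p. - d p" S])
    show "\<And>i j. i < n \<Longrightarrow> j < n \<Longrightarrow> - H $$ (i, j) = (\<Sum>p<n. U $$ (i, p) * complex_of_real (- d p) * cnj (U $$ (j, p)))"
      using dec by (simp add: sum_negf[symmetric])
    show "\<And>x. (\<Sum>i\<in>S. \<Sum>j\<in>S. complex_of_real (x i) * complex_of_real (x j) * - H $$ (i, j)) = 0"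
      using iso by (simp add: sum_negf)
  qed (use unit S in auto)
  have cp: "char_poly H = (\<Prod>a\<leftarrow>map (\<lambda>p. complex_of_real (d p)) [0..<n]. [:- a, 1:])"
    by (rule char_poly_decomp[OF H U UU Hd])
  have ep: "eta_plus n A = card {p. p < n \<and> 0 \<le> d p}"
    unfolding eta_plus_def H_def[symmetric] root_sum[OF cp] length_filter_map_upt by simp
  have em: "eta_minus n A = card {p. p < n \<and> 0 \<le> - d p}"
    unfolding eta_minus_def H_def[symmetric] root_sum[OF cp] length_filter_map_upt by simp
  show ?thesis using final_ineq k1 k2 ep em assms(3) by simp
qed

end
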